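(* If $x$, $y$ and $[x,y]$ are monic commutators in $P_n$, then $\sigma([x,y])=\sigma(x)\cup\sigma(y)$.
   Context: $P_n$ denotes the pure braid group on $n$ strands, generated by elements $p_{a,b}$ for $1\le a<b\le n$ subject to the relations: (A) $p_{a,b}p_{a,c}p_{b,c}=p_{a,c}p_{b,c}p_{a,b}=p_{b,c}p_{a,b}p_{a,c}$ for $1\le a<b<c\le n$; (B) $p_{a,b}p_{c,d}=p_{c,d}p_{a,b}$ and $p_{a,d}p_{b,c}=p_{b,c}p_{a,d}$ for $1\le a<b<c<d\le n$; (C) $p_{a,c}p_{b,c}^{-1}p_{b,d}p_{b,c}=p_{b,c}^{-1}p_{b,d}p_{b,c}p_{a,c}$ for $1\le a<b<c<d\le n$. Let $N=\{1,\dots,n\}$. For $S\subseteq N$, $P_S$ is the subgroup generated by the $p_{a,b}$ with $a,b\in S$. Commutator convention: $[x,y]=x^{-1}y^{-1}xy$. Monic commutators are defined recursively: each $p_{a,b}$ and $p_{a,b}^{-1}$ ($1\le a<b\le n$) is a monic commutator; if $x,y$ are monic commutators and $[x,y]\neq1$, then $[x,y]$ is a monic commutator. The support $\sigma(x)$ of $x\in P_n$ is the intersection of all $S\subseteq N$ such that $x\in P_S$. *)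

theory Defs
  imports Main
begin

text \<open>Pure braid group P_n as a finitely presented group: elements are words in
the letters p_{a,b}^{+-1} (1 <= a < b <= n) modulo the congruence generated by free
cancellation and the relations (A), (B), (C).\<close>

type_synonym letter = "(nat \<times> nat) \<times> bool"
type_synonym word = "letter list"

definition gens :: "nat set \<Rightarrow> letter set" where
  "gens S = {((a,b),s). a \<in> S \<and> b \<in> S \<and> a < b}"

abbreviation N :: "nat \<Rightarrow> nat set" where
  "N n \<equiv> {1..n}"

definition p :: "nat \<Rightarrow> nat \<Rightarrow> word" where
  "p a b = [((a,b),True)]"

definition pinv :: "nat \<Rightarrow> nat \<Rightarrow> word" where
  "pinv a b = [((a,b),False)]"

definition winv :: "word \<Rightarrow> word" where
  "winv w = rev (map (\<lambda>(g,s). (g, \<not> s)) w)"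

definition comm :: "word \<Rightarrow> word \<Rightarrow> word" where
  "comm x y = winv x @ winv y @ x @ y"

inductive eqv :: "nat \<Rightarrow> word \<Rightarrow> word \<Rightarrow> bool" for n where
  refl: "eqv n w w"
| sym: "eqv n u v \<Longrightarrow> eqv n v u"
| trans: "eqv n u v \<Longrightarrow> eqv n v w \<Longrightarrow> eqv n u w"
| ctxt: "eqv n u v \<Longrightarrow> set x \<subseteq> gens (N n) \<Longrightarrow> set y \<subseteq> gens (N n)
          \<Longrightarrow> eqv n (x @ u @ y) (x @ v @ y)"
| cancel: "((a,b),s) \<in> gens (N n) \<Longrightarrow> eqv n [((a,b),s), ((a,b), \<not> s)] []"
| relA1: "1 \<le> a \<Longrightarrow> a < b \<Longrightarrow> b < c \<Longrightarrow> c \<le> n \<Longrightarrow>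
          eqv n (p a b @ p a c @ p b c) (p a c @ p b c @ p a b)"
| relA2: "1 \<le> a \<Longrightarrow> a < b \<Longrightarrow> b < c \<Longrightarrow> c \<le> n \<Longrightarrow>
          eqv n (p a c @ p b c @ p a b) (p b c @ p a b @ p a c)"
| relB1: "1 \<le> a \<Longrightarrow> a < b \<Longrightarrow> b < c \<Longrightarrow> c < d \<Longrightarrow> d \<le> n \<Longrightarrow>
          eqv n (p a b @ p c d) (p c d @ p a b)"
| relB2: "1 \<le> a \<Longrightarrow> a < b \<Longrightarrow> b < c \<Longrightarrow> c < d \<Longrightarrow> d \<le> n \<Longrightarrow>
          eqv n (p a d @ p b c) (p b c @ p a d)"
| relC: "1 \<le> a \<Longrightarrow> a < b \<Longrightarrow> b < c \<Longrightarrow> c < d \<Longrightarrow> d \<le> n \<Longrightarrow>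
          eqv n (p a c @ pinv b c @ p b d @ p b c) (pinv b c @ p b d @ p b c @ p a c)"

text \<open>Monic commutators, as a predicate on words that is invariant under equality in P_n
(so it is really a predicate on group elements).\<close>
inductive monic :: "nat \<Rightarrow> word \<Rightarrow> bool" for n where
  gen: "1 \<le> a \<Longrightarrow> a < b \<Longrightarrow> b \<le> n \<Longrightarrow> monic n [((a,b),s)]"
| com: "monic n x \<Longrightarrow> monic n y \<Longrightarrow> \<not> eqv n (comm x y) [] \<Longrightarrow> monic n (comm x y)"
| eq: "monic n x \<Longrightarrow> eqv n x x' \<Longrightarrow> monic n x'"

definition supp :: "nat \<Rightarrow> word \<Rightarrow> nat set" where
  "supp n x = \<Inter> {S. S \<subseteq> N n \<and> (\<exists>v. set v \<subseteq> gens S \<and> eqv n v x)}"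

end

theory Submission
  imports Defs
begin

abbreviation valid :: "nat \<Rightarrow> word \<Rightarrow> bool" where
  "valid n w \<equiv> set w \<subseteq> gens (N n)"

lemma gens_mem[simp]: "(((a,b),s) \<in> gens S) = (a \<in> S \<and> b \<in> S \<and> a < b)"
  by (simp add: gens_def)

lemma eqv_valid: "eqv n u v \<Longrightarrow> valid n u = valid n v"
proof (induction rule: eqv.induct)
  case (cancel a b s)
  then show ?case by auto
qed (auto simp: p_def pinv_def)

lemma app_l: "eqv n u v \<Longrightarrow> valid n w \<Longrightarrow> eqv n (w @ u) (w @ v)"
  using eqv.ctxt[of n u v w "[]"] by simp

lemma app_r: "eqv n u v \<Longrightarrow> valid n w \<Longrightarrow> eqv n (u @ w) (v @ w)"
  using eqv.ctxt[of n u v "[]" w] by simp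

lemma app_cong: "eqv n a a' \<Longrightarrow> eqv n b b' \<Longrightarrow> valid n a' \<Longrightarrow> valid n b \<Longrightarrow>
   eqv n (a @ b) (a' @ b')"
  by (meson app_l app_r eqv.trans)

lemma winv_valid: "valid n w \<Longrightarrow> valid n (winv w)"
  by (auto simp: winv_def)

lemma winv_Cons: "winv (g # w) = winv w @ [(fst g, \<not> snd g)]"
  by (cases g) (simp add: winv_def)

lemma inv_left: "valid n w \<Longrightarrow> eqv n (winv w @ w) []"
proof (induction w)
  case Nil
  then show ?case by (simp add: winv_def eqv.refl)
next
  case (Cons g w)
  obtain a b s where g: "g = ((a,b),s)" by (metis prod.collapse)
  have c: "eqv n [((a,b), \<not> s), ((a,b), \<not> \<not> s)] []"
    using Cons.prems g by (intro eqv.cancel) auto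
  have "eqv n (winv w @ [((a,b), \<not> s), ((a,b), \<not> \<not> s)] @ w) (winv w @ [] @ w)"
    using Cons.prems by (intro eqv.ctxt[OF c] winv_valid) auto
  then have "eqv n (winv (g # w) @ g # w) (winv w @ w)"
    by (simp add: winv_Cons g)
  moreover have "eqv n (winv w @ w) []" using Cons.IH Cons.prems by simp
  ultimately show ?case by (meson eqv.trans)
qed

lemma winv_winv[simp]: "winv (winv w) = w"
  by (induction w) (auto simp: winv_def)

lemma inv_right: "valid n w \<Longrightarrow> eqv n (w @ winv w) []"
  using inv_left[where w="winv w" and n=n] winv_valid[where w=w and n=n] by simp

lemma winv_cong: "eqv n u v \<Longrightarrow> valid n u \<Longrightarrow> eqv n (winv u) (winv v)"
proof -
  assume e: "eqv n u v" and vu: "valid n u"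
  have vv: "valid n v" using eqv_valid[OF e] vu by simp
  have 1: "eqv n (winv u @ (v @ winv v) @ []) (winv u @ [] @ [])"
    using inv_right[OF vv] vu by (intro eqv.ctxt winv_valid) auto
  have 2: "eqv n ([] @ (winv u @ v) @ winv v) ([] @ (winv u @ u) @ winv v)"
    using vu vv by (intro eqv.ctxt app_l eqv.sym[OF e] winv_valid) auto
  have 3: "eqv n ([] @ (winv u @ u) @ winv v) ([] @ [] @ winv v)"
    using vu vv by (intro eqv.ctxt inv_left winv_valid) auto
  show ?thesis using 1 2 3
    by simp (meson eqv.sym eqv.trans)
qed

lemma comm_cong: "eqv n u u' \<Longrightarrow> eqv n w w' \<Longrightarrow> valid n u \<Longrightarrow> valid n w \<Longrightarrow>
  eqv n (comm u w) (comm u' w')"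
proof -
  assume a: "eqv n u u'" "eqv n w w'" "valid n u" "valid n w"
  have v: "valid n u'" "valid n w'" using a eqv_valid by auto
  have i1: "eqv n (winv u) (winv u')" "eqv n (winv w) (winv w')"
    using a winv_cong by auto
  have "eqv n (u @ w) (u' @ w')" using app_cong a v by auto
  moreover have "eqv n (winv w @ u @ w) (winv w' @ u' @ w')"
    using app_cong[OF i1(2) calculation] v a winv_valid by auto
  moreover have "eqv n (winv u @ winv w @ u @ w) (winv u' @ winv w' @ u' @ w')"
    using app_cong[OF i1(1) calculation(2)] v a winv_valid by auto
  ultimately show ?thesis by (simp add: comm_def)
qed

lemma monic_valid: "monic n x \<Longrightarrow> valid n x"
proof (induction rule: monic.induct)
  case (eq x x')
  then show ?case using eqv_valid by blast
qed (auto simp: comm_def winv_def)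

definition cnt :: "nat \<times> nat \<Rightarrow> word \<Rightarrow> int" where
  "cnt g w = sum_list (map (\<lambda>(h,s). if h = g then (if s then 1 else -1) else 0) w)"

lemma eqv_cnt: "eqv n u v \<Longrightarrow> cnt g u = cnt g v"
  by (induction rule: eqv.induct) (auto simp: cnt_def p_def pinv_def)

lemma monic_ne: "monic n x \<Longrightarrow> \<not> eqv n x []"
proof (induction rule: monic.induct)
  case (gen a b s)
  show ?case
  proof
    assume "eqv n [((a, b), s)] []"
    from eqv_cnt[OF this, of "(a,b)"] show False by (simp add: cnt_def split: if_splits)
  qed
next
  case (com x y) then show ?case by simp
next
  case (eq x x') then show ?case by (meson eqv.trans)
qed

definition del :: "nat \<Rightarrow> word \<Rightarrow> word" where
  "del i w = filter (\<lambda>((a,b),s). a \<noteq> i \<and> b \<noteq> i) w"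

lemma del_app[simp]: "del i (u @ v) = del i u @ del i v"
  by (simp add: del_def)

lemma del_valid: "valid n w \<Longrightarrow> valid n (del i w)"
  by (auto simp: del_def)

lemma del_winv: "del i (winv w) = winv (del i w)"
  by (induction w) (auto simp: del_def winv_def)

lemma del_comm: "del i (comm x y) = comm (del i x) (del i y)"
  by (simp add: comm_def del_winv)

lemma can3: "((b,c),False) \<in> gens (N n) \<Longrightarrow> valid n u \<Longrightarrow> valid n v \<Longrightarrow>
  eqv n (u @ [((b,c),False),((b,c),True)] @ v) (u @ [] @ v)"
  using eqv.cancel[of b c False n] by (intro eqv.ctxt) auto

lemma del_eqv: "eqv n u v \<Longrightarrow> eqv n (del i u) (del i v)"
proof (induction rule: eqv.induct)
  case (refl w) then show ?case by (rule eqv.refl)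
next
  case (sym u v) show ?case using sym.IH by (rule eqv.sym)
next
  case (trans u v w) show ?case using trans.IH by (rule eqv.trans)
next
  case (ctxt u v x y) then show ?case using del_valid[where w=x and n=n and i=i] del_valid[where w=y and n=n and i=i] by (simp add: eqv.ctxt)
next
  case (cancel a b s) then show ?case by (auto simp: del_def intro: eqv.refl eqv.cancel)
next
  case (relA1 a b c) then show ?case
    by (auto simp: del_def p_def intro: eqv.refl eqv.relA1[unfolded p_def pinv_def, simplified])
next
  case (relA2 a b c) then show ?case
    by (auto simp: del_def p_def intro: eqv.refl eqv.relA2[unfolded p_def pinv_def, simplified])
next
  case (relB1 a b c d) then show ?case
    by (auto simp: del_def p_def intro: eqv.refl eqv.relB1[unfolded p_def pinv_def, simplified])
next
  case (relB2 a b c d) then show ?case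
    by (auto simp: del_def p_def intro: eqv.refl eqv.relB2[unfolded p_def pinv_def, simplified])
next
  case (relC a b c d)
  show ?case
  proof (cases "i = d")
    case True
    with relC have dl: "del i (p a c @ pinv b c @ p b d @ p b c) = [((a,c),True)] @ [((b,c),False),((b,c),True)] @ []"
      and dr: "del i (pinv b c @ p b d @ p b c @ p a c) = [] @ [((b,c),False),((b,c),True)] @ [((a,c),True)]"
      by (auto simp: del_def p_def pinv_def)
    have 1: "eqv n ([((a,c),True)] @ [((b,c),False),((b,c),True)] @ []) ([((a,c),True)] @ [] @ [])"
      using relC by (intro can3) auto
    have 2: "eqv n ([] @ [((b,c),False),((b,c),True)] @ [((a,c),True)]) ([] @ [] @ [((a,c),True)])"
      using relC by (intro can3) auto
    show ?thesis unfolding dl dr using 1 2 by simp (meson eqv.sym eqv.trans)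
  next
    case False
    with relC show ?thesis
      by (auto simp: del_def p_def pinv_def intro: eqv.refl eqv.relC[unfolded p_def pinv_def, simplified])
  qed
qed

lemma comm_nil1: "valid n w \<Longrightarrow> eqv n (comm [] w) []"
  by (simp add: comm_def winv_def[of "[]"] inv_left)

lemma comm_nil2: "valid n w \<Longrightarrow> eqv n (comm w []) []"
  by (simp add: comm_def winv_def[of "[]"] inv_left)

lemma dich: "monic n x \<Longrightarrow> eqv n (del i x) [] \<or> eqv n (del i x) x"
proof (induction rule: monic.induct)
  case (gen a b s)
  then show ?case by (auto simp: del_def intro: eqv.refl)
next
  case (com x y)
  have vx: "valid n x" and vy: "valid n y" using com monic_valid by auto
  have vdx: "valid n (del i x)" and vdy: "valid n (del i y)" using vx vy del_valid by auto
  show ?case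
  proof (cases "eqv n (del i x) []")
    case True
    have "eqv n (comm (del i x) (del i y)) (comm [] (del i y))"
      using comm_cong[OF True eqv.refl vdx vdy] .
    then have "eqv n (comm (del i x) (del i y)) []"
      using comm_nil1[OF vdy] eqv.trans by blast
    then show ?thesis by (simp add: del_comm)
  next
    case F1: False
    show ?thesis
    proof (cases "eqv n (del i y) []")
      case True
      have "eqv n (comm (del i x) (del i y)) (comm (del i x) [])"
        using comm_cong[OF eqv.refl True vdx vdy] .
      then have "eqv n (comm (del i x) (del i y)) []"
        using comm_nil2[OF vdx] eqv.trans by blast
      then show ?thesis by (simp add: del_comm)
    next
      case False
      with F1 com have "eqv n (del i x) x" "eqv n (del i y) y" by auto
      from comm_cong[OF this vdx vdy] show ?thesis by (simp add: del_comm)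
    qed
  qed
next
  case (eq x x')
  have d: "eqv n (del i x) (del i x')" using del_eqv[OF eq.hyps(2)] .
  from eq.IH show ?case
  proof
    assume "eqv n (del i x) []"
    then show ?thesis using d by (meson eqv.sym eqv.trans)
  next
    assume "eqv n (del i x) x"
    then show ?thesis using d eq.hyps(2) by (meson eqv.sym eqv.trans)
  qed
qed

lemma gens_mono: "S \<subseteq> T \<Longrightarrow> gens S \<subseteq> gens T"
  by (auto simp: gens_def)

lemma del_id: "set v \<subseteq> gens S \<Longrightarrow> i \<notin> S \<Longrightarrow> del i v = v"
  unfolding del_def by (rule filter_True) (auto simp: gens_def)

lemma main_sup:
  assumes mx: "monic n x" and my: "monic n y" and mc: "monic n (comm x y)"
    and ix: "i \<in> supp n x"
  shows "i \<in> supp n (comm x y)"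
proof (rule ccontr)
  assume "i \<notin> supp n (comm x y)"
  then obtain S v where S: "S \<subseteq> N n" "set v \<subseteq> gens S" "eqv n v (comm x y)" "i \<notin> S"
    unfolding supp_def by blast
  have vx: "valid n x" and vy: "valid n y" using mx my monic_valid by auto
  have vdx: "valid n (del i x)" and vdy: "valid n (del i y)" using vx vy del_valid by auto
  have "del i v = v" using del_id S by blast
  then have e1: "eqv n v (comm (del i x) (del i y))"
    using del_eqv[OF S(3), of i] by (simp add: del_comm)
  from dich[OF mx, of i] show False
  proof
    assume "eqv n (del i x) []"
    have "eqv n (comm (del i x) (del i y)) (comm [] (del i y))"
      using comm_cong[OF \<open>eqv n (del i x) []\<close> eqv.refl vdx vdy] .
    then have "eqv n (comm (del i x) (del i y)) []"
      using comm_nil1[OF vdy] eqv.trans by blast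
    then have "eqv n (comm x y) []" using e1 S(3) by (meson eqv.sym eqv.trans)
    then show False using monic_ne[OF mc] by simp
  next
    assume h: "eqv n (del i x) x"
    have "set (del i x) \<subseteq> gens (N n - {i})"
      using vx by (auto simp: del_def gens_def)
    then have "N n - {i} \<in> {S. S \<subseteq> N n \<and> (\<exists>v. set v \<subseteq> gens S \<and> eqv n v x)}"
      using h by blast
    then have "i \<notin> supp n x" unfolding supp_def by blast
    then show False using ix by simp
  qed
qed

lemma main_sup_y:
  assumes mx: "monic n x" and my: "monic n y" and mc: "monic n (comm x y)"
    and iy: "i \<in> supp n y"
  shows "i \<in> supp n (comm x y)"
proof (rule ccontr)
  assume "i \<notin> supp n (comm x y)"
  then obtain S v where S: "S \<subseteq> N n" "set v \<subseteq> gens S" "eqv n v (comm x y)" "i \<notin> S"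
    unfolding supp_def by blast
  have vx: "valid n x" and vy: "valid n y" using mx my monic_valid by auto
  have vdx: "valid n (del i x)" and vdy: "valid n (del i y)" using vx vy del_valid by auto
  have "del i v = v" using del_id S by blast
  then have e1: "eqv n v (comm (del i x) (del i y))"
    using del_eqv[OF S(3), of i] by (simp add: del_comm)
  from dich[OF my, of i] show False
  proof
    assume "eqv n (del i y) []"
    have "eqv n (comm (del i x) (del i y)) (comm (del i x) [])"
      using comm_cong[OF eqv.refl \<open>eqv n (del i y) []\<close> vdx vdy] .
    then have "eqv n (comm (del i x) (del i y)) []"
      using comm_nil2[OF vdx] eqv.trans by blast
    then have "eqv n (comm x y) []" using e1 S(3) by (meson eqv.sym eqv.trans)
    then show False using monic_ne[OF mc] by simp
  next
    assume h: "eqv n (del i y) y"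
    have "set (del i y) \<subseteq> gens (N n - {i})"
      using vy by (auto simp: del_def gens_def)
    then have "N n - {i} \<in> {S. S \<subseteq> N n \<and> (\<exists>v. set v \<subseteq> gens S \<and> eqv n v y)}"
      using h by blast
    then have "i \<notin> supp n y" unfolding supp_def by blast
    then show False using iy by simp
  qed
qed

lemma supp_eqv: "eqv n a b \<Longrightarrow> supp n a = supp n b"
  unfolding supp_def by (metis (no_types, opaque_lifting) eqv.sym eqv.trans)

lemma sub_dir:
  assumes vx: "valid n x" and vy: "valid n y"
  shows "supp n (comm x y) \<subseteq> supp n x \<union> supp n y"
proof
  fix z assume z: "z \<in> supp n (comm x y)"
  show "z \<in> supp n x \<union> supp n y"
  proof (rule ccontr)
    assume "z \<notin> supp n x \<union> supp n y"
    then obtain S1 v1 S2 v2 where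
      A: "S1 \<subseteq> N n" "set v1 \<subseteq> gens S1" "eqv n v1 x" "z \<notin> S1"
      and B: "S2 \<subseteq> N n" "set v2 \<subseteq> gens S2" "eqv n v2 y" "z \<notin> S2"
      unfolding supp_def by blast
    have vv1: "valid n v1" using A gens_mono by blast
    have vv2: "valid n v2" using B gens_mono by blast
    have "set (comm v1 v2) \<subseteq> gens (S1 \<union> S2)"
      using A(2) B(2) gens_mono[of S1 "S1 \<union> S2"] gens_mono[of S2 "S1 \<union> S2"]
      by (auto simp: comm_def winv_def)
    moreover have "eqv n (comm v1 v2) (comm x y)"
      using comm_cong[OF A(3) B(3) vv1 vv2] .
    ultimately have "S1 \<union> S2 \<in> {S. S \<subseteq> N n \<and> (\<exists>v. set v \<subseteq> gens S \<and> eqv n v (comm x y))}"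
      using A(1) B(1) by blast
    then have "z \<in> S1 \<union> S2" using z unfolding supp_def by blast
    then show False using A(4) B(4) by simp
  qed
qed

theorem proposition1p6:
  fixes n :: nat and x y :: word
  assumes "monic n x" and "monic n y" and "monic n (comm x y)"
  shows "supp n (comm x y) = supp n x \<union> supp n y"
proof
  have vx: "valid n x" and vy: "valid n y" using assms monic_valid by auto
  show "supp n (comm x y) \<subseteq> supp n x \<union> supp n y" using sub_dir[OF vx vy] .
  show "supp n x \<union> supp n y \<subseteq> supp n (comm x y)"
  proof
    fix i assume "i \<in> supp n x \<union> supp n y"
    then show "i \<in> supp n (comm x y)"
    proof
      assume "i \<in> supp n x" then show ?thesis using main_sup assms by blast
    next
      assume "i \<in> supp n y"
      then show ?thesis using main_sup_y assms by blast
    qed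
  qed
qed

end
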